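(* For every odd prime $p$, $$\sum_{\substack{k_1,k_2,k_3,k_4 = 0\\ k_1+k_2+k_3+k_4 = p-1}}^{\frac{p-1}{2}} \left[\prod_{i=1}^4 (k_i+1)_{\frac{p-1}{2}}^2\right]\left(H_{\frac{p-1}{2}+k_4} - H_{k_4}\right) \equiv 0 \pmod{p}.$$
   Context: $(a)_n = a(a+1)\cdots(a+n-1)$ is the rising factorial with $(a)_0 = 1$; $H_n = \sum_{j=1}^n \frac1j$ with $H_0 = 0$. The sum runs over integers $0 \le k_i \le \frac{p-1}{2}$ with $\sum k_i = p-1$; the terms are $p$-integral rationals and the congruence is in $\mathbb{Z}_{(p)}$. *)

theory Defs
  imports Complex_Main "HOL-Computational_Algebra.Primes"
begin

definition H :: "nat \<Rightarrow> rat" where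
  "H n = (\<Sum>j=1..n. 1 / of_nat j)"

definition cong_zero_Zp :: "nat \<Rightarrow> rat \<Rightarrow> bool" where
  "cong_zero_Zp p x \<longleftrightarrow> (\<exists>a b :: int. \<not> int p dvd b \<and> x = of_int (int p * a) / of_int b)"

end

theory Submission
  imports Defs "HOL-Number_Theory.Cong"
begin

definition pint :: "nat \<Rightarrow> rat \<Rightarrow> bool" where
  "pint p x \<longleftrightarrow> (\<exists>a b :: int. \<not> int p dvd b \<and> x = of_int a / of_int b)"

lemma cz_iff: "cong_zero_Zp p x \<longleftrightarrow> (\<exists>y. pint p y \<and> x = of_nat p * y)"
proof
  assume "cong_zero_Zp p x"
  then obtain a b :: int where "\<not> int p dvd b" "x = of_int (int p * a) / of_int b"
    unfolding cong_zero_Zp_def by blast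
  thus "\<exists>y. pint p y \<and> x = of_nat p * y" unfolding pint_def
    by (intro exI[of _ "of_int a / of_int b"]) auto
next
  assume "\<exists>y. pint p y \<and> x = of_nat p * y"
  then obtain a b :: int where "\<not> int p dvd b" "x = of_nat p * (of_int a / of_int b)"
    unfolding pint_def by blast
  thus "cong_zero_Zp p x" unfolding cong_zero_Zp_def by (intro exI[of _ a] exI[of _ b]) auto
qed

lemma pint_int: "prime p \<Longrightarrow> pint p (of_int a)"
  unfolding pint_def
  by (rule exI[of _ a], rule exI[of _ 1]) (auto simp: prime_nat_int_transfer)

lemma ndvd_mult: "prime p \<Longrightarrow> \<not> int p dvd b \<Longrightarrow> \<not> int p dvd d \<Longrightarrow> \<not> int p dvd (b * d)"
  by (metis prime_dvd_mult_iff prime_nat_int_transfer)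

lemma pint_add: assumes "prime p" "pint p x" "pint p y" shows "pint p (x + y)"
proof -
  obtain a b c d :: int where h: "\<not> int p dvd b" "x = of_int a / of_int b" "\<not> int p dvd d" "y = of_int c / of_int d"
    using assms unfolding pint_def by blast
  have "b \<noteq> 0" "d \<noteq> 0" using h by auto
  hence "x + y = of_int (a*d + c*b) / of_int (b*d)" using h by (simp add: field_simps)
  thus ?thesis unfolding pint_def using ndvd_mult[OF assms(1) h(1) h(3)] by blast
qed

lemma pint_mult: assumes "prime p" "pint p x" "pint p y" shows "pint p (x * y)"
proof -
  obtain a b c d :: int where h: "\<not> int p dvd b" "x = of_int a / of_int b" "\<not> int p dvd d" "y = of_int c / of_int d"
    using assms unfolding pint_def by blast
  hence "x * y = of_int (a*c) / of_int (b*d)" by simp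
  thus ?thesis unfolding pint_def using ndvd_mult[OF assms(1) h(1) h(3)] by blast
qed

lemma pint_inv: assumes "prime p" "\<not> int p dvd b" shows "pint p (1 / of_int b)"
  unfolding pint_def using assms by (metis of_int_1)

lemma cz_add: "prime p \<Longrightarrow> cong_zero_Zp p x \<Longrightarrow> cong_zero_Zp p y \<Longrightarrow> cong_zero_Zp p (x + y)"
  unfolding cz_iff by (metis distrib_left pint_add)

lemma cz_mult: "prime p \<Longrightarrow> cong_zero_Zp p x \<Longrightarrow> pint p y \<Longrightarrow> cong_zero_Zp p (x * y)"
  unfolding cz_iff by (metis mult.assoc pint_mult)

lemma cz_zero: "prime p \<Longrightarrow> cong_zero_Zp p 0"
  unfolding cz_iff by (rule exI[of _ 0]) (metis mult_zero_right of_int_0 pint_int)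

lemma cz_sum: "prime p \<Longrightarrow> (\<And>i. i \<in> A \<Longrightarrow> cong_zero_Zp p (f i)) \<Longrightarrow> cong_zero_Zp p (sum f A)"
  by (induction A rule: infinite_finite_induct) (auto intro: cz_add cz_zero)

lemma cz_int: assumes "prime p" "int p dvd a" shows "cong_zero_Zp p (of_int a)"
proof -
  obtain c where "a = int p * c" using assms by blast
  thus ?thesis unfolding cz_iff using pint_int[OF assms(1), of c] by auto
qed

lemma cz_half: assumes "prime p" "odd p" "cong_zero_Zp p (2 * x)" shows "cong_zero_Zp p x"
proof -
  obtain a b :: int where h: "\<not> int p dvd b" "2 * x = of_int (int p * a) / of_int b"
    using assms unfolding cong_zero_Zp_def by blast
  have "\<not> int p dvd 2"
  proof
    assume "int p dvd 2" hence "p dvd 2" by presburger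
    hence "p \<le> 2" by (rule dvd_imp_le) simp
    moreover have "p \<ge> 2" using assms(1) by (rule prime_ge_2_nat)
    ultimately have "p = 2" by simp
    thus False using assms(2) by simp
  qed
  hence "\<not> int p dvd (2 * b)" using ndvd_mult[OF assms(1) _ h(1)] by blast
  moreover have "x = of_int (int p * a) / of_int (2 * b)" using h(2) by (simp add: field_simps)
  ultimately show ?thesis unfolding cong_zero_Zp_def by blast
qed

lemma pint_sum: "prime p \<Longrightarrow> (\<And>i. i \<in> A \<Longrightarrow> pint p (f i)) \<Longrightarrow> pint p (sum f A)"
  by (induction A rule: infinite_finite_induct) (auto intro: pint_add pint_int[where a=0, simplified])

lemma cz_p: "pint p y \<Longrightarrow> cong_zero_Zp p (of_nat p * y)"
  unfolding cz_iff by blast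

lemma combine:
  assumes "prime p" "cong_zero_Zp p (h1 + h2)" "pint p h2" "[a2 = a1] (mod int p)"
  shows "cong_zero_Zp p (of_int a1 * h1 + of_int a2 * h2)"
proof -
  obtain m where m: "a2 = a1 + int p * m"
    using assms(4) by (metis cong_iff_lin cong_sym)
  have "of_int a1 * h1 + of_int a2 * h2 = (h1 + h2) * of_int a1 + of_nat p * (of_int m * h2)"
    by (simp add: m algebra_simps)
  moreover have "cong_zero_Zp p ((h1 + h2) * of_int a1)"
    by (rule cz_mult[OF assms(1,2) pint_int[OF assms(1)]])
  moreover have "cong_zero_Zp p (of_nat p * (of_int m * h2))"
    by (rule cz_p, rule pint_mult[OF assms(1) pint_int[OF assms(1)] assms(3)])
  ultimately show ?thesis using cz_add[OF assms(1)] by simp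
qed

definition qq :: "nat \<Rightarrow> nat \<Rightarrow> int" where
  "qq n k = (\<Prod>i<n. int (k + 1 + i))"

lemma poch_qq: "pochhammer (of_nat (k + 1)) n = (of_int (qq n k) :: rat)"
  unfolding qq_def pochhammer_prod atLeast0LessThan by (simp add: add.assoc)

lemma qq_cong:
  assumes "p = 2 * n + 1" "k \<le> n"
  shows "[qq n (n - k) ^ 2 = qq n k ^ 2] (mod int p)"
proof -
  have "qq n (n - k) = (\<Prod>i<n. int (n - k + 1 + (n - Suc i)))"
    unfolding qq_def by (rule prod.nat_diff_reindex[symmetric])
  also have "\<dots> = (\<Prod>i<n. int p - int (k + 1 + i))"
    by (rule prod.cong) (use assms in auto)
  finally have "qq n (n - k) ^ 2 = (\<Prod>i<n. (int p - int (k + 1 + i)) ^ 2)"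
    by (simp add: prod_power_distrib)
  also have "[\<dots> = (\<Prod>i<n. int (k + 1 + i) ^ 2)] (mod int p)"
  proof (rule cong_prod)
    fix i
    have "(int p - int (k + 1 + i)) ^ 2 = int (k + 1 + i) ^ 2 + int p * (int p - 2 * int (k + 1 + i))"
      by (simp add: power2_eq_square algebra_simps)
    thus "[(int p - int (k + 1 + i)) ^ 2 = int (k + 1 + i) ^ 2] (mod int p)"
      by (metis cong_iff_lin cong_sym)
  qed
  also have "(\<Prod>i<n. int (k + 1 + i) ^ 2) = qq n k ^ 2"
    unfolding qq_def by (simp add: prod_power_distrib)
  finally show ?thesis .
qed

definition hs :: "nat \<Rightarrow> nat \<Rightarrow> rat" where
  "hs n k = (\<Sum>i<n. 1 / of_nat (k + 1 + i))"

lemma H_Suc: "H (Suc m) = H m + 1 / of_nat (Suc m)"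
  unfolding H_def by simp

lemma H_diff: "H (n + k) - H k = hs n k"
  by (induction n) (auto simp: hs_def H_Suc H_def[of k] algebra_simps)

lemma pint_hs:
  assumes "prime p" "k + n < p"
  shows "pint p (hs n k)"
  unfolding hs_def
proof (rule pint_sum[OF assms(1)])
  fix i assume "i \<in> {..<n}"
  hence "0 < k + 1 + i" "k + 1 + i < p" using assms by auto
  hence "\<not> int p dvd int (k + 1 + i)"
    by (metis int_dvd_int_iff nat_dvd_not_less)
  thus "pint p (1 / of_nat (k + 1 + i))"
    using pint_inv[OF assms(1)] by (metis of_int_of_nat_eq)
qed

lemma hs_pair:
  assumes "prime p" "p = 2 * n + 1" "k \<le> n"
  shows "cong_zero_Zp p (hs n k + hs n (n - k))"
proof -
  have "hs n (n - k) = (\<Sum>i<n. 1 / of_nat (n - k + 1 + (n - Suc i)))"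
    unfolding hs_def by (rule sum.nat_diff_reindex[symmetric])
  also have "\<dots> = (\<Sum>i<n. 1 / of_nat (p - (k + 1 + i)))"
    by (rule sum.cong) (use assms in auto)
  finally have "hs n k + hs n (n - k) =
      (\<Sum>i<n. 1 / of_nat (k + 1 + i) + 1 / of_nat (p - (k + 1 + i)))"
    unfolding hs_def by (simp add: sum.distrib)
  also have "cong_zero_Zp p \<dots>"
  proof (rule cz_sum[OF assms(1)])
    fix i assume "i \<in> {..<n}"
    define a where "a = k + 1 + i"
    have a: "0 < a" "a < p" using assms \<open>i \<in> {..<n}\<close> unfolding a_def by auto
    have nd1: "\<not> int p dvd int a" using a by (metis int_dvd_int_iff nat_dvd_not_less)
    have "0 < p - a" "p - a < p" using a by auto
    hence nd2: "\<not> int p dvd int (p - a)" by (metis int_dvd_int_iff nat_dvd_not_less)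
    note nd = nd1 nd2
    have "1 / of_nat a + 1 / of_nat (p - a) = (of_nat p :: rat) * (1 / of_int (int a * int (p - a)))"
      using a by (simp add: field_simps of_nat_diff)
    moreover have "pint p (1 / of_int (int a * int (p - a)))"
      by (rule pint_inv[OF assms(1) ndvd_mult[OF assms(1) nd]])
    ultimately show "cong_zero_Zp p (1 / of_nat (k + 1 + i) + 1 / of_nat (p - (k + 1 + i)))"
      using cz_p a_def by metis
  qed
  finally show ?thesis .
qed

lemma sum_pair:
  fixes f :: "nat \<times> nat \<times> nat \<times> nat \<Rightarrow> rat"
  assumes "prime p" "odd p"
    and inv: "\<And>a b c d. (a, b, c, d) \<in> I \<Longrightarrow> (n - a, n - b, n - c, n - d) \<in> I \<and> a \<le> n \<and> b \<le> n \<and> c \<le> n \<and> d \<le> n"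
    and pr: "\<And>a b c d. (a, b, c, d) \<in> I \<Longrightarrow> cong_zero_Zp p (f (a, b, c, d) + f (n - a, n - b, n - c, n - d))"
  shows "cong_zero_Zp p (sum f I)"
proof -
  define s where "s = (\<lambda>(a, b, c, d). (n - a, n - b, n - c, n - d))"
  have "sum f I = sum (\<lambda>x. f (s x)) I"
    by (rule sum.reindex_bij_witness[where i=s and j=s]) (auto simp: s_def dest: inv)
  hence "2 * sum f I = sum (\<lambda>x. f x + f (s x)) I"
    by (simp add: sum.distrib)
  moreover have "cong_zero_Zp p (sum (\<lambda>x. f x + f (s x)) I)"
    by (rule cz_sum[OF assms(1)]) (auto simp: s_def intro: pr)
  ultimately show ?thesis using cz_half[OF assms(1,2)] by simp
qed

theorem lemma2p10:
  fixes p :: nat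
  assumes "prime p" and "odd p"
  shows "cong_zero_Zp p
    (\<Sum>(k1, k2, k3, k4) \<in> {(k1, k2, k3, k4). k1 \<le> (p - 1) div 2 \<and> k2 \<le> (p - 1) div 2 \<and>
                                k3 \<le> (p - 1) div 2 \<and> k4 \<le> (p - 1) div 2 \<and>
                                k1 + k2 + k3 + k4 = p - 1}.
       (pochhammer (of_nat (k1 + 1)) ((p - 1) div 2) ^ 2 *
        pochhammer (of_nat (k2 + 1)) ((p - 1) div 2) ^ 2 *
        pochhammer (of_nat (k3 + 1)) ((p - 1) div 2) ^ 2 *
        pochhammer (of_nat (k4 + 1)) ((p - 1) div 2) ^ 2 :: rat) *
       (H ((p - 1) div 2 + k4) - H k4))"
proof -
  define n where "n = (p - 1) div 2"
  have pn: "p = 2 * n + 1" using assms(2) unfolding n_def by presburger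
  show ?thesis
    unfolding n_def[symmetric]
  proof (rule sum_pair[OF assms, where n=n])
    fix a b c d
    assume "(a, b, c, d) \<in> {(k1, k2, k3, k4). k1 \<le> n \<and> k2 \<le> n \<and> k3 \<le> n \<and> k4 \<le> n \<and> k1 + k2 + k3 + k4 = p - 1}"
    thus "(n - a, n - b, n - c, n - d) \<in> {(k1, k2, k3, k4). k1 \<le> n \<and> k2 \<le> n \<and> k3 \<le> n \<and> k4 \<le> n \<and> k1 + k2 + k3 + k4 = p - 1} \<and> a \<le> n \<and> b \<le> n \<and> c \<le> n \<and> d \<le> n"
      using pn by auto
  next
    fix a b c d
    assume "(a, b, c, d) \<in> {(k1, k2, k3, k4). k1 \<le> n \<and> k2 \<le> n \<and> k3 \<le> n \<and> k4 \<le> n \<and> k1 + k2 + k3 + k4 = p - 1}"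
    hence le: "a \<le> n" "b \<le> n" "c \<le> n" "d \<le> n" by auto
    let ?A = "qq n a ^ 2 * qq n b ^ 2 * qq n c ^ 2 * qq n d ^ 2"
    let ?B = "qq n (n - a) ^ 2 * qq n (n - b) ^ 2 * qq n (n - c) ^ 2 * qq n (n - d) ^ 2"
    have cg: "[?B = ?A] (mod int p)"
      by (intro cong_mult qq_cong[OF pn] le)
    have "cong_zero_Zp p (of_int ?A * hs n d + of_int ?B * hs n (n - d))"
      by (rule combine[OF assms(1) hs_pair[OF assms(1) pn le(4)] pint_hs[OF assms(1)] cg]) (use pn le in auto)
    thus "cong_zero_Zp p ((\<lambda>(k1, k2, k3, k4).
             (pochhammer (of_nat (k1 + 1)) n ^ 2 * pochhammer (of_nat (k2 + 1)) n ^ 2 *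
              pochhammer (of_nat (k3 + 1)) n ^ 2 * pochhammer (of_nat (k4 + 1)) n ^ 2 :: rat) *
             (H (n + k4) - H k4)) (a, b, c, d) +
           (\<lambda>(k1, k2, k3, k4).
             (pochhammer (of_nat (k1 + 1)) n ^ 2 * pochhammer (of_nat (k2 + 1)) n ^ 2 *
              pochhammer (of_nat (k3 + 1)) n ^ 2 * pochhammer (of_nat (k4 + 1)) n ^ 2 :: rat) *
             (H (n + k4) - H k4)) (n - a, n - b, n - c, n - d))"
      by (simp only: prod.case poch_qq H_diff of_int_mult of_int_power)
  qed
qed

end
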